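(* Let $S$ be a semilattice. Then the normal dual $N^*\mathbb{L}(S)$ of $\mathbb{L}(S)$ is isomorphic to the normal category $\mathbb{R}(S)$, and the normal dual $N^*\mathbb{R}(S)$ of $\mathbb{R}(S)$ is isomorphic to the normal category $\mathbb{L}(S)$.
   Context: A semilattice is a commutative semigroup in which every element is idempotent. The category $\mathbb{L}(S)$ has objects $Se$, $e\in S$, morphisms $\rho(e,u,f)\colon Se\to Sf$, $x\mapsto xu$, $u\in eSf$, composed left to right; $\mathbb{R}(S)$ has objects $eS$, morphisms $\lambda(e,u,f)\colon eS\to fS$, $x\mapsto ux$, $u\in fSe$, with $\lambda(e,u,f)\lambda(f,v,h)=\lambda(e,vu,h)$. In either category, a normal cone with apex $c$ is a family $\gamma(a)\colon a\to c$ with (inclusion $a\to b$)$\gamma(b)=\gamma(a)$ whenever $a\subseteq b$ and some $\gamma(a)$ an isomorphism; the epimorphic component of $\rho(e,u,f)$ (resp. $\lambda(e,u,f)$) is $\rho(e,u,g)$ with $Sg=Su$ (resp. $\lambda(e,u,g)$ with $gS=uS$); the cones form a semigroup $T\mathbb{L}(S)$ (resp. $T\mathbb{R}(S)$) under $(\gamma\cdot\delta)(a)=\gamma(a)\,\delta(c_\gamma)^\circ$. For a cone $\gamma$ with apex $c$ and epimorphism $h\colon c\to c'$, $\gamma\ast h$ is $a\mapsto\gamma(a)h$. The normal dual $N^*\mathcal{C}$ of $\mathcal{C}\in\{\mathbb{L}(S),\mathbb{R}(S)\}$ is the category whose objects are the functors $H(\gamma;-)\colon\mathcal{C}\to\mathbf{Set}$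 for cones $\gamma$, with $H(\gamma;d)=\{\gamma\ast f^\circ : f\colon c_\gamma\to d\}$, $H(\gamma;g)\colon\gamma\ast f^\circ\mapsto\gamma\ast(fg)^\circ$, and whose morphisms are natural transformations; isomorphism is as normal categories. *)

theory Defs
  imports "HOL-Library.FuncSet"
begin

definition semilattice_on :: "'a set \<Rightarrow> ('a \<Rightarrow> 'a \<Rightarrow> 'a) \<Rightarrow> bool" where
  "semilattice_on S m \<longleftrightarrow>
     (\<forall>x\<in>S. \<forall>y\<in>S. m x y \<in> S) \<and>
     (\<forall>x\<in>S. \<forall>y\<in>S. \<forall>z\<in>S. m (m x y) z = m x (m y z)) \<and>
     (\<forall>x\<in>S. \<forall>y\<in>S. m x y = m y x) \<and>
     (\<forall>x\<in>S. m x x = x)"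

text \<open>Composition is written diagrammatically: cmp f g means first f, then g.
  sub a b is the subobject relation a \<subseteq> b and incl a b the inclusion a \<rightarrow> b.\<close>
record ('o, 'm) ncat =
  ob   :: "'o set"
  hom  :: "'o \<Rightarrow> 'o \<Rightarrow> 'm set"
  cmp  :: "'m \<Rightarrow> 'm \<Rightarrow> 'm"
  idm  :: "'o \<Rightarrow> 'm"
  sub  :: "'o \<Rightarrow> 'o \<Rightarrow> bool"
  incl :: "'o \<Rightarrow> 'o \<Rightarrow> 'm"

definition ncat_iso :: "('o, 'm, 'x) ncat_scheme \<Rightarrow> ('p, 'n, 'y) ncat_scheme \<Rightarrow> bool" where
  "ncat_iso C D \<longleftrightarrow> (\<exists>Fo Fm.
     bij_betw Fo (ob C) (ob D) \<and>
     (\<forall>a\<in>ob C. \<forall>b\<in>ob C. bij_betw Fm (hom C a b) (hom D (Fo a) (Fo b))) \<and>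
     (\<forall>a\<in>ob C. \<forall>b\<in>ob C. \<forall>c\<in>ob C. \<forall>f\<in>hom C a b. \<forall>g\<in>hom C b c.
        Fm (cmp C f g) = cmp D (Fm f) (Fm g)) \<and>
     (\<forall>a\<in>ob C. Fm (idm C a) = idm D (Fo a)) \<and>
     (\<forall>a\<in>ob C. \<forall>b\<in>ob C. sub C a b \<longleftrightarrow> sub D (Fo a) (Fo b)) \<and>
     (\<forall>a\<in>ob C. \<forall>b\<in>ob C. sub C a b \<longrightarrow> Fm (incl C a b) = incl D (Fo a) (Fo b)))"

text \<open>A morphism is a map together with its domain and codomain.\<close>
type_synonym 'a mor = "'a set \<times> ('a \<Rightarrow> 'a) \<times> 'a set"

definition mcomp :: "'a mor \<Rightarrow> 'a mor \<Rightarrow> 'a mor" where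
  "mcomp f g = (fst f, \<lambda>x\<in>fst f. fst (snd g) (fst (snd f) x), snd (snd g))"

definition midm :: "'a set \<Rightarrow> 'a mor" where
  "midm a = (a, \<lambda>x\<in>a. x, a)"

definition mincl :: "'a set \<Rightarrow> 'a set \<Rightarrow> 'a mor" where
  "mincl a b = (a, \<lambda>x\<in>a. x, b)"

definition lid :: "'a set \<Rightarrow> ('a \<Rightarrow> 'a \<Rightarrow> 'a) \<Rightarrow> 'a \<Rightarrow> 'a set" where
  "lid S m e = {m x e | x. x \<in> S}"

definition rid :: "'a set \<Rightarrow> ('a \<Rightarrow> 'a \<Rightarrow> 'a) \<Rightarrow> 'a \<Rightarrow> 'a set" where
  "rid S m e = {m e x | x. x \<in> S}"

definition mid :: "'a set \<Rightarrow> ('a \<Rightarrow> 'a \<Rightarrow> 'a) \<Rightarrow> 'a \<Rightarrow> 'a \<Rightarrow> 'a set" where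
  "mid S m e f = {m (m e x) f | x. x \<in> S}"

definition rho :: "'a set \<Rightarrow> ('a \<Rightarrow> 'a \<Rightarrow> 'a) \<Rightarrow> 'a \<Rightarrow> 'a \<Rightarrow> 'a \<Rightarrow> 'a mor" where
  "rho S m e u f = (lid S m e, \<lambda>x\<in>lid S m e. m x u, lid S m f)"

definition lam :: "'a set \<Rightarrow> ('a \<Rightarrow> 'a \<Rightarrow> 'a) \<Rightarrow> 'a \<Rightarrow> 'a \<Rightarrow> 'a \<Rightarrow> 'a mor" where
  "lam S m e u f = (rid S m e, \<lambda>x\<in>rid S m e. m u x, rid S m f)"

definition Lcat :: "'a set \<Rightarrow> ('a \<Rightarrow> 'a \<Rightarrow> 'a) \<Rightarrow> ('a set, 'a mor) ncat" where
  "Lcat S m = \<lparr> ob = {lid S m e | e. e \<in> S},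
     hom = (\<lambda>a b. {rho S m e u f | e u f. e \<in> S \<and> f \<in> S \<and> u \<in> mid S m e f
                                          \<and> a = lid S m e \<and> b = lid S m f}),
     cmp = mcomp, idm = midm, sub = (\<lambda>a b. a \<subseteq> b), incl = mincl \<rparr>"

definition Rcat :: "'a set \<Rightarrow> ('a \<Rightarrow> 'a \<Rightarrow> 'a) \<Rightarrow> ('a set, 'a mor) ncat" where
  "Rcat S m = \<lparr> ob = {rid S m e | e. e \<in> S},
     hom = (\<lambda>a b. {lam S m e u f | e u f. e \<in> S \<and> f \<in> S \<and> u \<in> mid S m f e
                                          \<and> a = rid S m e \<and> b = rid S m f}),
     cmp = mcomp, idm = midm, sub = (\<lambda>a b. a \<subseteq> b), incl = mincl \<rparr>"

text \<open>Epimorphic components: rho(e,u,f)\<degree> = rho(e,u,g) with Sg = Su;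
  lambda(e,u,f)\<degree> = lambda(e,u,g) with gS = uS.\<close>
definition Lepi :: "'a set \<Rightarrow> ('a \<Rightarrow> 'a \<Rightarrow> 'a) \<Rightarrow> 'a mor \<Rightarrow> 'a mor" where
  "Lepi S m r = (THE r'. \<exists>e u f g. e \<in> S \<and> u \<in> S \<and> f \<in> S \<and> g \<in> S \<and> u \<in> mid S m e f \<and>
       r = rho S m e u f \<and> lid S m g = lid S m u \<and> r' = rho S m e u g)"

definition Repi :: "'a set \<Rightarrow> ('a \<Rightarrow> 'a \<Rightarrow> 'a) \<Rightarrow> 'a mor \<Rightarrow> 'a mor" where
  "Repi S m r = (THE r'. \<exists>e u f g. e \<in> S \<and> u \<in> S \<and> f \<in> S \<and> g \<in> S \<and> u \<in> mid S m f e \<and>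
       r = lam S m e u f \<and> rid S m g = rid S m u \<and> r' = lam S m e u g)"

definition is_iso :: "('o, 'm, 'x) ncat_scheme \<Rightarrow> 'm \<Rightarrow> bool" where
  "is_iso C f \<longleftrightarrow> (\<exists>a\<in>ob C. \<exists>b\<in>ob C. \<exists>g. f \<in> hom C a b \<and> g \<in> hom C b a \<and>
                     cmp C f g = idm C a \<and> cmp C g f = idm C b)"

definition is_cone :: "('o, 'm, 'x) ncat_scheme \<Rightarrow> ('o \<Rightarrow> 'm) \<Rightarrow> 'o \<Rightarrow> bool" where
  "is_cone C \<gamma> c \<longleftrightarrow> c \<in> ob C \<and> (\<forall>a\<in>ob C. \<gamma> a \<in> hom C a c) \<and> \<gamma> \<in> extensional (ob C) \<and>
     (\<forall>a\<in>ob C. \<forall>b\<in>ob C. sub C a b \<longrightarrow> cmp C (incl C a b) (\<gamma> b) = \<gamma> a) \<and>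
     (\<exists>a\<in>ob C. is_iso C (\<gamma> a))"

definition cones :: "('o, 'm, 'x) ncat_scheme \<Rightarrow> ('o \<Rightarrow> 'm) set" where
  "cones C = {\<gamma>. \<exists>c. is_cone C \<gamma> c}"

definition apex :: "('o, 'm, 'x) ncat_scheme \<Rightarrow> ('o \<Rightarrow> 'm) \<Rightarrow> 'o" where
  "apex C \<gamma> = (THE c. is_cone C \<gamma> c)"

definition cstar :: "('o, 'm, 'x) ncat_scheme \<Rightarrow> ('o \<Rightarrow> 'm) \<Rightarrow> 'm \<Rightarrow> ('o \<Rightarrow> 'm)" where
  "cstar C \<gamma> h = (\<lambda>a\<in>ob C. cmp C (\<gamma> a) h)"

definition mors :: "('o, 'm, 'x) ncat_scheme \<Rightarrow> 'm set" where
  "mors C = (\<Union>a\<in>ob C. \<Union>b\<in>ob C. hom C a b)"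

definition Hset :: "('o, 'm, 'x) ncat_scheme \<Rightarrow> ('m \<Rightarrow> 'm) \<Rightarrow> ('o \<Rightarrow> 'm) \<Rightarrow> 'o \<Rightarrow> ('o \<Rightarrow> 'm) set" where
  "Hset C ep \<gamma> d = {cstar C \<gamma> (ep f) | f. f \<in> hom C (apex C \<gamma>) d}"

definition Hmap :: "('o, 'm, 'x) ncat_scheme \<Rightarrow> ('m \<Rightarrow> 'm) \<Rightarrow> ('o \<Rightarrow> 'm) \<Rightarrow> 'm
                    \<Rightarrow> ('o \<Rightarrow> 'm) \<Rightarrow> ('o \<Rightarrow> 'm)" where
  "Hmap C ep \<gamma> g =
     (\<lambda>\<delta>\<in>(\<Union>d\<in>ob C. \<Union>d'\<in>ob C. if g \<in> hom C d d' then Hset C ep \<gamma> d else {}).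
        THE \<delta>'. \<exists>d\<in>ob C. \<exists>d'\<in>ob C. \<exists>f. g \<in> hom C d d' \<and> f \<in> hom C (apex C \<gamma>) d \<and>
               \<delta> = cstar C \<gamma> (ep f) \<and> \<delta>' = cstar C \<gamma> (ep (cmp C f g)))"

text \<open>A set-valued functor on C: object part and morphism part (both extensional).\<close>
type_synonym ('o, 'm) hfun = "('o \<Rightarrow> ('o \<Rightarrow> 'm) set) \<times> ('m \<Rightarrow> ('o \<Rightarrow> 'm) \<Rightarrow> ('o \<Rightarrow> 'm))"

text \<open>A natural transformation: source functor, components, target functor.\<close>
type_synonym ('o, 'm) ntrans =
  "('o, 'm) hfun \<times> ('o \<Rightarrow> ('o \<Rightarrow> 'm) \<Rightarrow> ('o \<Rightarrow> 'm)) \<times> ('o, 'm) hfun"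

definition Hfun :: "('o, 'm, 'x) ncat_scheme \<Rightarrow> ('m \<Rightarrow> 'm) \<Rightarrow> ('o \<Rightarrow> 'm) \<Rightarrow> ('o, 'm) hfun" where
  "Hfun C ep \<gamma> = ((\<lambda>d\<in>ob C. Hset C ep \<gamma> d), (\<lambda>g\<in>mors C. Hmap C ep \<gamma> g))"

definition is_nt :: "('o, 'm, 'x) ncat_scheme \<Rightarrow> ('o, 'm) hfun \<Rightarrow> ('o, 'm) hfun
                     \<Rightarrow> ('o \<Rightarrow> ('o \<Rightarrow> 'm) \<Rightarrow> ('o \<Rightarrow> 'm)) \<Rightarrow> bool" where
  "is_nt C F G \<sigma> \<longleftrightarrow>
     \<sigma> \<in> extensional (ob C) \<and>
     (\<forall>d\<in>ob C. \<sigma> d \<in> fst F d \<rightarrow> fst G d \<and> \<sigma> d \<in> extensional (fst F d)) \<and>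
     (\<forall>d\<in>ob C. \<forall>d'\<in>ob C. \<forall>g\<in>hom C d d'. \<forall>x\<in>fst F d.
        snd G g (\<sigma> d x) = \<sigma> d' (snd F g x))"

definition ntcomp :: "('o, 'm, 'x) ncat_scheme \<Rightarrow> ('o, 'm) ntrans \<Rightarrow> ('o, 'm) ntrans \<Rightarrow> ('o, 'm) ntrans" where
  "ntcomp C s t = (fst s, (\<lambda>d\<in>ob C. \<lambda>x\<in>fst (fst s) d. fst (snd t) d (fst (snd s) d x)),
                   snd (snd t))"

definition Ndual :: "('o, 'm, 'x) ncat_scheme \<Rightarrow> ('m \<Rightarrow> 'm) \<Rightarrow> (('o, 'm) hfun, ('o, 'm) ntrans) ncat" where
  "Ndual C ep = \<lparr> ob = Hfun C ep ` cones C,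
     hom = (\<lambda>F G. {(F, \<sigma>, G) | \<sigma>. is_nt C F G \<sigma>}),
     cmp = ntcomp C,
     idm = (\<lambda>F. (F, (\<lambda>d\<in>ob C. \<lambda>x\<in>fst F d. x), F)),
     sub = (\<lambda>F G. \<forall>d\<in>ob C. fst F d \<subseteq> fst G d),
     incl = (\<lambda>F G. (F, (\<lambda>d\<in>ob C. \<lambda>x\<in>fst F d. x), G)) \<rparr>"

end

theory Submission imports Defs begin

context fixes S :: "'a set" and m :: "'a \<Rightarrow> 'a \<Rightarrow> 'a" assumes SL: "semilattice_on S m"
begin

lemma cl[simp]: "x\<in>S \<Longrightarrow> y\<in>S \<Longrightarrow> m x y \<in> S" using SL unfolding semilattice_on_def by blast
lemma assoc[simp]: "x\<in>S \<Longrightarrow> y\<in>S \<Longrightarrow> z\<in>S \<Longrightarrow> m (m x y) z = m x (m y z)" using SL unfolding semilattice_on_def by blast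
lemma comm: "x\<in>S \<Longrightarrow> y\<in>S \<Longrightarrow> m x y = m y x" using SL unfolding semilattice_on_def by blast
lemma idem[simp]: "x\<in>S \<Longrightarrow> m x x = x" using SL unfolding semilattice_on_def by blast
lemma lcomm: "x\<in>S \<Longrightarrow> y\<in>S \<Longrightarrow> z\<in>S \<Longrightarrow> m x (m y z) = m y (m x z)"
  by (metis assoc comm)
lemma idem2[simp]: "x\<in>S \<Longrightarrow> y\<in>S \<Longrightarrow> m x (m x y) = m x y"
  by (metis assoc idem)
lemmas AC = comm lcomm

abbreviation "LI \<equiv> lid S m"
abbreviation "L \<equiv> Lcat S m"
abbreviation "R \<equiv> rho S m"
abbreviation "MI \<equiv> mid S m"

lemma lid_char: "e\<in>S \<Longrightarrow> LI e = {x\<in>S. m x e = x}"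
  unfolding lid_def
proof (safe, goal_cases)
  case (1 x x') then show ?case by simp
next
  case (2 x x') then show ?case by simp
next
  case (3 x) then show ?case by metis
qed

lemma rid_eq: "e\<in>S \<Longrightarrow> rid S m e = LI e"
  unfolding lid_def rid_def by (auto simp: AC) (metis comm)

lemma mid_char: assumes "e\<in>S" "f\<in>S" shows "MI e f = {u\<in>S. m u e = u \<and> m u f = u}"
proof (rule set_eqI)
  fix u
  show "u \<in> MI e f \<longleftrightarrow> u \<in> {u\<in>S. m u e = u \<and> m u f = u}"
  proof
    assume "u \<in> MI e f"
    then obtain x where x: "x \<in> S" "u = m (m e x) f" unfolding mid_def by blast
    have 1: "m u e = u" unfolding x(2) using assms x(1) by (simp add: AC)
    have 2: "m u f = u" unfolding x(2) using assms x(1) by (simp add: AC)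
    have 3: "u \<in> S" unfolding x(2) using assms x(1) by simp
    show "u \<in> {u\<in>S. m u e = u \<and> m u f = u}" using 1 2 3 by blast
  next
    assume u: "u \<in> {u\<in>S. m u e = u \<and> m u f = u}"
    then have "m e u = u" using assms comm by auto
    then have "u = m (m e u) f" using u by simp
    then show "u \<in> MI e f" using u unfolding mid_def by blast
  qed
qed

lemma mid_sym: "e\<in>S \<Longrightarrow> f\<in>S \<Longrightarrow> MI f e = MI e f"
  by (simp only: mid_char) blast

lemma lid_mem: "e\<in>S \<Longrightarrow> e \<in> LI e" by (simp add: lid_char)

lemma lid_inj: assumes "e\<in>S" "f\<in>S" "LI e = LI f" shows "e = f"
proof -
  have "e \<in> LI f" "f \<in> LI e" using lid_mem assms by metis+
  then have 1: "m e f = e" "m f e = f" using assms lid_char by blast+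
  have "e = m e f" using 1 by simp
  also have "\<dots> = m f e" using comm assms by blast
  also have "\<dots> = f" using 1 by simp
  finally show ?thesis .
qed

lemma lid_sub: assumes "e\<in>S" "f\<in>S" shows "LI e \<subseteq> LI f \<longleftrightarrow> m e f = e"
proof
  assume "LI e \<subseteq> LI f"
  then have "e \<in> LI f" using lid_mem assms by blast
  then show "m e f = e" using lid_char assms by blast
next
  assume ef: "m e f = e"
  show "LI e \<subseteq> LI f"
  proof
    fix x assume "x \<in> LI e"
    then have x: "x \<in> S" "m x e = x" using lid_char assms by blast+
    have "m x f = m (m x e) f" using x by simp
    also have "\<dots> = m x (m e f)" using assoc[of x e f] x assms by blast
    also have "\<dots> = x" using ef x by simp
    finally show "x \<in> LI f" using lid_char assms x by blast
  qed
qed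

lemma mid_le: "e\<in>S \<Longrightarrow> f\<in>S \<Longrightarrow> u \<in> MI e f \<Longrightarrow> u \<in> S \<and> m u e = u \<and> m u f = u"
  using mid_char by blast

lemma mid_I: "e\<in>S \<Longrightarrow> f\<in>S \<Longrightarrow> u \<in> S \<Longrightarrow> m u e = u \<Longrightarrow> m u f = u \<Longrightarrow> u \<in> MI e f"
  using mid_char by blast

lemma rho_inj:
  assumes "e\<in>S" "f\<in>S" "e'\<in>S" "f'\<in>S" "u \<in> MI e f" "u' \<in> MI e' f'" "R e u f = R e' u' f'"
  shows "e = e' \<and> u = u' \<and> f = f'"
proof -
  have 1: "LI e = LI e'" "LI f = LI f'" using assms(7) unfolding rho_def by simp_all
  then have ee: "e = e'" "f = f'" using lid_inj assms by blast+
  have "(\<lambda>x\<in>LI e. m x u) = (\<lambda>x\<in>LI e. m x u')" using assms(7) ee unfolding rho_def by simp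
  then have "(\<lambda>x\<in>LI e. m x u) e = (\<lambda>x\<in>LI e. m x u') e" by simp
  then have "m e u = m e u'" using lid_mem assms by simp
  moreover have "m u e = u" "m u' e = u'" using mid_le assms ee by blast+
  moreover have "m e u = m u e" "m e u' = m u' e" using assms ee comm mid_le by blast+
  ultimately have "u = u'" by metis
  then show ?thesis using ee by blast
qed

lemma mid_S: "e\<in>S \<Longrightarrow> f\<in>S \<Longrightarrow> u \<in> MI e f \<Longrightarrow> u \<in> S" by (simp add: mid_char)

lemma lam_rho: assumes "e\<in>S" "u\<in>S" "f\<in>S" shows "lam S m e u f = R e u f"
proof -
  have "(\<lambda>x\<in>LI e. m u x) = (\<lambda>x\<in>LI e. m x u)"
  proof (rule restrict_ext)
    fix x assume "x \<in> LI e" then have "x \<in> S" using lid_char assms by blast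
    then show "m u x = m x u" using comm assms by blast
  qed
  then show ?thesis unfolding lam_def rho_def using rid_eq assms by simp
qed

lemma key_lr: "e\<in>S \<Longrightarrow> f\<in>S \<Longrightarrow> u \<in> MI f e \<Longrightarrow>
   lam S m e u f = R e u f \<and> rid S m e = LI e \<and> rid S m f = LI f \<and> u \<in> MI e f"
proof -
  assume a: "e\<in>S" "f\<in>S" "u \<in> MI f e"
  have "u \<in> MI e f" using mid_sym a by blast
  moreover have "u \<in> S" using a mid_S by blast
  ultimately show ?thesis using lam_rho rid_eq a by blast
qed

lemma Rcat_eq: "Rcat S m = L"
proof -
  have o: "{rid S m e | e. e \<in> S} = {LI e | e. e \<in> S}" using rid_eq by blast
  have h: "(\<lambda>a b. {lam S m e u f | e u f. e \<in> S \<and> f \<in> S \<and> u \<in> MI f e \<and> a = rid S m e \<and> b = rid S m f})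
     = (\<lambda>a b. {R e u f | e u f. e \<in> S \<and> f \<in> S \<and> u \<in> MI e f \<and> a = LI e \<and> b = LI f})"
  proof (intro ext set_eqI iffI)
    fix a b x
    assume "x \<in> {lam S m e u f | e u f. e \<in> S \<and> f \<in> S \<and> u \<in> MI f e \<and> a = rid S m e \<and> b = rid S m f}"
    then obtain e u f where h: "x = lam S m e u f" "e \<in> S" "f \<in> S" "u \<in> MI f e" "a = rid S m e" "b = rid S m f" by blast
    have k: "lam S m e u f = R e u f" "rid S m e = LI e" "rid S m f = LI f" "u \<in> MI e f" using key_lr[OF h(2,3,4)] by auto
    have "x = R e u f \<and> e\<in>S \<and> f\<in>S \<and> u\<in>MI e f \<and> a = LI e \<and> b = LI f" using h k by simp
    then show "x \<in> {R e u f | e u f. e \<in> S \<and> f \<in> S \<and> u \<in> MI e f \<and> a = LI e \<and> b = LI f}"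
      by blast
  next
    fix a b x
    assume "x \<in> {R e u f | e u f. e \<in> S \<and> f \<in> S \<and> u \<in> MI e f \<and> a = LI e \<and> b = LI f}"
    then obtain e u f where h: "x = R e u f" "e \<in> S" "f \<in> S" "u \<in> MI e f" "a = LI e" "b = LI f" by blast
    have u: "u \<in> MI f e" using h mid_sym by blast
    have k: "lam S m e u f = R e u f" "rid S m e = LI e" "rid S m f = LI f" using key_lr[OF h(2,3) u] by auto
    have "x = lam S m e u f \<and> e\<in>S \<and> f\<in>S \<and> u\<in>MI f e \<and> a = rid S m e \<and> b = rid S m f" using h k u by simp
    then show "x \<in> {lam S m e u f | e u f. e \<in> S \<and> f \<in> S \<and> u \<in> MI f e \<and> a = rid S m e \<and> b = rid S m f}"
      by blast
  qed
  show ?thesis unfolding Rcat_def Lcat_def o h ..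
qed

lemma Repi_eq: "Repi S m = Lepi S m"
proof (intro ext)
  fix r
  have k: "(u \<in> MI f e \<and> r = lam S m e u f \<and> rid S m g = rid S m u \<and> r' = lam S m e u g) \<longleftrightarrow>
      (u \<in> MI e f \<and> r = R e u f \<and> LI g = LI u \<and> r' = R e u g)"
    if "e\<in>S" "u\<in>S" "f\<in>S" "g\<in>S" for e u f g r'
  proof -
    have "MI f e = MI e f" "rid S m g = LI g" "rid S m u = LI u" "lam S m e u f = R e u f" "lam S m e u g = R e u g"
      using that mid_sym rid_eq lam_rho by blast+
    then show ?thesis by simp
  qed
  have "(\<exists>e u f g. e \<in> S \<and> u \<in> S \<and> f \<in> S \<and> g \<in> S \<and> u \<in> MI f e \<and>
       r = lam S m e u f \<and> rid S m g = rid S m u \<and> r' = lam S m e u g) \<longleftrightarrow>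
     (\<exists>e u f g. e \<in> S \<and> u \<in> S \<and> f \<in> S \<and> g \<in> S \<and> u \<in> MI e f \<and>
       r = R e u f \<and> LI g = LI u \<and> r' = R e u g)" for r'
  proof
    assume "\<exists>e u f g. e \<in> S \<and> u \<in> S \<and> f \<in> S \<and> g \<in> S \<and> u \<in> MI f e \<and>
       r = lam S m e u f \<and> rid S m g = rid S m u \<and> r' = lam S m e u g"
    then obtain e u f g where h: "e \<in> S" "u \<in> S" "f \<in> S" "g \<in> S" "u \<in> MI f e \<and>
       r = lam S m e u f \<and> rid S m g = rid S m u \<and> r' = lam S m e u g" by blast
    have "u \<in> MI e f \<and> r = R e u f \<and> LI g = LI u \<and> r' = R e u g" using k[OF h(1-4)] h(5) by blast
    then show "\<exists>e u f g. e \<in> S \<and> u \<in> S \<and> f \<in> S \<and> g \<in> S \<and> u \<in> MI e f \<and>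
       r = R e u f \<and> LI g = LI u \<and> r' = R e u g" using h(1-4) by blast
  next
    assume "\<exists>e u f g. e \<in> S \<and> u \<in> S \<and> f \<in> S \<and> g \<in> S \<and> u \<in> MI e f \<and>
       r = R e u f \<and> LI g = LI u \<and> r' = R e u g"
    then obtain e u f g where h: "e \<in> S" "u \<in> S" "f \<in> S" "g \<in> S" "u \<in> MI e f \<and>
       r = R e u f \<and> LI g = LI u \<and> r' = R e u g" by blast
    have "u \<in> MI f e \<and> r = lam S m e u f \<and> rid S m g = rid S m u \<and> r' = lam S m e u g" using k[OF h(1-4)] h(5) by blast
    then show "\<exists>e u f g. e \<in> S \<and> u \<in> S \<and> f \<in> S \<and> g \<in> S \<and> u \<in> MI f e \<and>
       r = lam S m e u f \<and> rid S m g = rid S m u \<and> r' = lam S m e u g" using h(1-4) by blast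
  qed
  then show "Repi S m r = Lepi S m r" unfolding Repi_def Lepi_def by simp
qed


lemma lid_E: "x \<in> LI e \<Longrightarrow> e \<in> S \<Longrightarrow> x \<in> S \<and> m x e = x" using lid_char by blast
lemma lid_I: "x \<in> S \<Longrightarrow> m x e = x \<Longrightarrow> e \<in> S \<Longrightarrow> x \<in> LI e" using lid_char by blast

lemma ob_L: "ob L = {LI e | e. e \<in> S}" by (simp add: Lcat_def)
lemma hom_L: "hom L a b = {R e u f | e u f. e \<in> S \<and> f \<in> S \<and> u \<in> MI e f \<and> a = LI e \<and> b = LI f}"
  by (simp add: Lcat_def)
lemma ops_L: "cmp L = mcomp" "idm L = midm" "sub L = (\<lambda>a b. a \<subseteq> b)" "incl L = mincl"
  by (simp_all add: Lcat_def)

lemma ob_LI: "e \<in> S \<Longrightarrow> LI e \<in> ob L" unfolding ob_L by blast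

lemma ob_E: assumes "a \<in> ob L" obtains e where "e \<in> S" "a = LI e"
  using assms unfolding ob_L by blast

lemma hom_LI: assumes "e \<in> S" "f \<in> S"
  shows "h \<in> hom L (LI e) (LI f) \<longleftrightarrow> (\<exists>u\<in>MI e f. h = R e u f)"
proof
  assume "h \<in> hom L (LI e) (LI f)"
  then obtain e' u f' where h: "e' \<in> S" "f' \<in> S" "u \<in> MI e' f'" "LI e = LI e'" "LI f = LI f'" "h = R e' u f'"
    unfolding hom_L by blast
  have "e = e'" "f = f'" using lid_inj h assms by blast+
  then show "\<exists>u\<in>MI e f. h = R e u f" using h by blast
next
  assume "\<exists>u\<in>MI e f. h = R e u f"
  then show "h \<in> hom L (LI e) (LI f)" unfolding hom_L using assms by blast
qed

lemma R_in_hom: "e \<in> S \<Longrightarrow> f \<in> S \<Longrightarrow> u \<in> MI e f \<Longrightarrow> R e u f \<in> hom L (LI e) (LI f)"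
  using hom_LI by blast

lemma hom_gen: assumes "h \<in> hom L a b"
  obtains e f u where "e\<in>S" "f\<in>S" "u \<in> MI e f" "a = LI e" "b = LI f" "h = R e u f"
  using assms unfolding hom_L by blast

lemma mult_mid: assumes "e\<in>S" "f\<in>S" "g\<in>S" "u \<in> MI e f" "v \<in> MI f g" shows "m u v \<in> MI e g"
proof -
  have u: "u \<in> S" "m u e = u" and v: "v \<in> S" "m v g = v" using mid_le assms by blast+
  have "m (m u v) e = m (m u e) v" using u(1) v(1) assms by (simp add: AC)
  also have "\<dots> = m u v" using u by simp
  finally have 1: "m (m u v) e = m u v" .
  have "m (m u v) g = m u (m v g)" using u(1) v(1) assms by (simp add: AC)
  also have "\<dots> = m u v" using v by simp
  finally have 2: "m (m u v) g = m u v" .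
  show ?thesis using 1 2 mid_I assms u v by simp
qed

lemma mcomp_R: assumes "e\<in>S" "f\<in>S" "g\<in>S" "u \<in> MI e f" "v \<in> MI f g"
  shows "mcomp (R e u f) (R f v g) = R e (m u v) g"
proof -
  have u: "u \<in> S" "m u f = u" and v: "v \<in> S" using mid_le assms by blast+
  have "(\<lambda>x\<in>LI e. (\<lambda>y\<in>LI f. m y v) ((\<lambda>x\<in>LI e. m x u) x)) = (\<lambda>x\<in>LI e. m x (m u v))"
  proof (rule restrict_ext)
    fix x assume "x \<in> LI e"
    then have x: "x \<in> S" using lid_E assms by blast
    have "m (m x u) f = m x (m u f)" using x u assms by simp
    also have "\<dots> = m x u" using u by simp
    finally have "m x u \<in> LI f" using lid_I x u assms by simp
    then show "(\<lambda>y\<in>LI f. m y v) ((\<lambda>x\<in>LI e. m x u) x) = m x (m u v)" using x u v \<open>x \<in> LI e\<close> by simp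
  qed
  then show ?thesis unfolding mcomp_def rho_def fst_conv snd_conv by simp
qed

lemma midm_R: "e \<in> S \<Longrightarrow> midm (LI e) = R e e e"
  unfolding midm_def rho_def by (auto intro!: restrict_ext dest: lid_E)

lemma mincl_R: "e \<in> S \<Longrightarrow> f \<in> S \<Longrightarrow> mincl (LI e) (LI f) = R e e f"
  unfolding mincl_def rho_def by (auto intro!: restrict_ext dest: lid_E)

lemma self_mid: "e \<in> S \<Longrightarrow> f \<in> S \<Longrightarrow> m e f = e \<Longrightarrow> e \<in> MI e f"
  using mid_I by simp

lemma prod_mid: assumes "e \<in> S" "c \<in> S" shows "m e c \<in> MI e c"
proof -
  have "m (m e c) e = m e c" using assms by (simp add: AC)
  moreover have "m (m e c) c = m e c" using assms by simp
  ultimately show ?thesis using mid_I assms by simp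
qed

definition cone where "cone c = (\<lambda>a\<in>ob L. (a, \<lambda>x\<in>a. m x c, LI c))"

lemma cone_at: assumes "e \<in> S" "c \<in> S" shows "cone c (LI e) = R e (m e c) c"
proof -
  have "(\<lambda>x\<in>LI e. m x c) = (\<lambda>x\<in>LI e. m x (m e c))"
  proof (rule restrict_ext)
    fix x assume "x \<in> LI e"
    then have x: "x \<in> S" "m x e = x" using lid_E assms by blast+
    have "m x (m e c) = m (m x e) c" using x(1) assms by simp
    also have "\<dots> = m x c" using x by simp
    finally show "m x c = m x (m e c)" by simp
  qed
  then show ?thesis unfolding cone_def rho_def using ob_LI assms by simp
qed


lemma cone_hom: "c \<in> S \<Longrightarrow> a \<in> ob L \<Longrightarrow> cone c a \<in> hom L a (LI c)"
  by (metis ob_E cone_at R_in_hom prod_mid)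

lemma cone_is: assumes c: "c \<in> S" shows "is_cone L (cone c) (LI c)"
  unfolding is_cone_def
proof (intro conjI ballI impI)
  show "LI c \<in> ob L" using ob_LI c by blast
  show "\<And>a. a \<in> ob L \<Longrightarrow> cone c a \<in> hom L a (LI c)" using cone_hom c by blast
  show "cone c \<in> extensional (ob L)" unfolding cone_def by simp
next
  fix a b assume ab: "a \<in> ob L" "b \<in> ob L" "sub L a b"
  obtain e where e: "e \<in> S" "a = LI e" using ab ob_E by blast
  obtain f where f: "f \<in> S" "b = LI f" using ab ob_E by blast
  have ef: "m e f = e" using ab e f lid_sub unfolding ops_L by blast
  have "cmp L (incl L a b) (cone c b) = mcomp (R e e f) (R f (m f c) c)"
    unfolding ops_L e f using mincl_R cone_at e f c by simp
  also have "\<dots> = R e (m e (m f c)) c" using mcomp_R e f c self_mid ef prod_mid by simp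
  also have "m e (m f c) = m e c"
  proof -
    have "m e (m f c) = m (m e f) c" using e f c by simp
    then show ?thesis using ef by simp
  qed
  finally show "cmp L (incl L a b) (cone c b) = cone c a" using cone_at e c by simp
next
  have cc: "cone c (LI c) = R c c c" using cone_at c by simp
  have cm: "c \<in> MI c c" using self_mid c by simp
  have "is_iso L (R c c c)"
    unfolding is_iso_def ops_L
    apply (rule bexI[of _ "LI c"], rule bexI[of _ "LI c"], rule exI[of _ "R c c c"])
    using R_in_hom[OF c c cm] mcomp_R[OF c c c cm cm] midm_R[OF c] ob_LI[OF c] c by simp_all
  then show "\<exists>a\<in>ob L. is_iso L (cone c a)" using cc ob_LI c by metis
qed

lemma cone_unique: assumes "is_cone L \<gamma> a" shows "\<exists>c\<in>S. a = LI c \<and> \<gamma> = cone c"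
proof -
  have a: "a \<in> ob L" and hom: "\<And>b. b \<in> ob L \<Longrightarrow> \<gamma> b \<in> hom L b a" and ext: "\<gamma> \<in> extensional (ob L)"
    and compat: "\<And>x y. x \<in> ob L \<Longrightarrow> y \<in> ob L \<Longrightarrow> x \<subseteq> y \<Longrightarrow> mcomp (mincl x y) (\<gamma> y) = \<gamma> x"
    and iso: "\<exists>b\<in>ob L. is_iso L (\<gamma> b)"
    using assms unfolding is_cone_def ops_L by auto
  obtain c where c: "c \<in> S" "a = LI c" using a ob_E by blast
  have homE: "\<exists>u\<in>MI e c. \<gamma> (LI e) = R e u c" if "e \<in> S" for e
    using hom[OF ob_LI[OF that]] hom_LI that c by blast
  obtain a0 where a0: "a0 \<in> ob L" "is_iso L (\<gamma> a0)" using iso by blast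
  obtain e0 where e0: "e0 \<in> S" "a0 = LI e0" using a0 ob_E by blast
  obtain u0 where u0: "u0 \<in> MI e0 c" "\<gamma> a0 = R e0 u0 c" using homE e0 by blast
  obtain a1 b1 g where ab: "a1 \<in> ob L" "b1 \<in> ob L" "\<gamma> a0 \<in> hom L a1 b1" "g \<in> hom L b1 a1"
    "mcomp (\<gamma> a0) g = midm a1" "mcomp g (\<gamma> a0) = midm b1"
    using a0(2) unfolding is_iso_def ops_L by blast
  obtain e1 f1 u1 where h1: "e1\<in>S" "f1\<in>S" "u1 \<in> MI e1 f1" "a1 = LI e1" "b1 = LI f1" "\<gamma> a0 = R e1 u1 f1"
    using ab(3) hom_gen by blast
  have "e1 = e0 \<and> u1 = u0 \<and> f1 = c" using rho_inj[OF h1(1,2) e0(1) c(1) h1(3) u0(1)] h1(6) u0(2) by simp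
  then have a1: "a1 = LI e0" and b1: "b1 = LI c" using h1 by auto
  obtain v where v: "v \<in> MI c e0" "g = R c v e0" using ab(4) hom_LI a1 b1 c e0 by blast
  have "R e0 (m u0 v) e0 = R e0 e0 e0"
    using ab(5) mcomp_R[OF e0(1) c(1) e0(1) u0(1) v(1)] midm_R[OF e0(1)] u0(2) v(2) a1 by simp
  then have 1: "m u0 v = e0"
    using rho_inj[OF e0(1) e0(1) e0(1) e0(1) mult_mid[OF e0(1) c(1) e0(1) u0(1) v(1)] self_mid[OF e0(1) e0(1)]] e0 by simp
  have "R c (m v u0) c = R c c c"
    using ab(6) mcomp_R[OF c(1) e0(1) c(1) v(1) u0(1)] midm_R[OF c(1)] u0(2) v(2) b1 by simp
  then have 2: "m v u0 = c"
    using rho_inj[OF c(1) c(1) c(1) c(1) mult_mid[OF c(1) e0(1) c(1) v(1) u0(1)] self_mid[OF c(1) c(1)]] c by simp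
  have u0S: "u0 \<in> S" "m u0 e0 = u0" and vS: "v \<in> S" using mid_le u0 v e0 c by blast+
  have ec: "e0 = c" using 1 2 comm u0S vS by metis
  have "u0 = m u0 e0" using u0S by simp
  also have "\<dots> = m u0 (m u0 v)" using 1 by simp
  also have "\<dots> = m u0 v" using idem2 u0S vS by blast
  also have "\<dots> = e0" using 1 by simp
  finally have uc: "u0 = c" using ec by simp
  have gc: "\<gamma> (LI c) = R c c c" using u0 uc ec e0 by simp
  have main: "\<gamma> (LI e) = cone c (LI e)" if e: "e \<in> S" for e
  proof -
    define d where "d = m e c"
    have dS: "d \<in> S" using d_def e c by simp
    have dc: "m d c = d" using d_def e c by simp
    have de: "m d e = d" using d_def e c by (simp add: AC)
    obtain u where u: "u \<in> MI e c" "\<gamma> (LI e) = R e u c" using homE e by blast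
    have uS: "u \<in> S" "m u e = u" "m u c = u" using mid_le u e c by blast+
    have sub1: "LI d \<subseteq> LI c" using lid_sub dS c dc by blast
    have sub2: "LI d \<subseteq> LI e" using lid_sub dS e de by blast
    have "\<gamma> (LI d) = mcomp (mincl (LI d) (LI c)) (\<gamma> (LI c))"
      using compat[OF ob_LI[OF dS] ob_LI[OF c(1)] sub1] by simp
    also have "\<dots> = R d (m d c) c" using mincl_R dS c gc mcomp_R self_mid dc by simp
    finally have g1: "\<gamma> (LI d) = R d d c" using dc by simp
    have "\<gamma> (LI d) = mcomp (mincl (LI d) (LI e)) (\<gamma> (LI e))"
      using compat[OF ob_LI[OF dS] ob_LI[OF e] sub2] by simp
    also have "\<dots> = R d (m d u) c" using mincl_R dS e c u mcomp_R self_mid de by simp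
    finally have "R d (m d u) c = R d d c" using g1 by simp
    then have "m d u = d"
      using rho_inj[OF dS c(1) dS c(1) mult_mid[OF dS e c(1) self_mid[OF dS e de] u(1)] self_mid[OF dS c(1) dc]] by simp
    moreover have "m d u = u"
    proof -
      have "m d u = m e (m c u)" using d_def e c uS by simp
      also have "\<dots> = m e (m u c)" using comm c uS by metis
      also have "\<dots> = m e u" using uS by simp
      also have "\<dots> = m u e" using comm e uS by metis
      finally show ?thesis using uS by simp
    qed
    ultimately have "u = d" by simp
    then show ?thesis using u cone_at e c d_def by simp
  qed
  have "\<gamma> = cone c"
  proof
    fix x show "\<gamma> x = cone c x"
    proof (cases "x \<in> ob L")
      case True then show ?thesis using main ob_E by metis
    next
      case False then show ?thesis using ext unfolding cone_def extensional_def by simp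
    qed
  qed
  then show ?thesis using c by blast
qed


abbreviation "EP \<equiv> Lepi S m"

lemma cone_inj: assumes "c \<in> S" "c' \<in> S" "cone c = cone c'" shows "c = c'"
proof -
  have "R c (m c c) c = R c (m c c') c'" using cone_at assms by metis
  then have "R c c c = R c (m c c') c'" using assms by simp
  then show ?thesis using rho_inj[OF assms(1) assms(1) assms(1) assms(2) self_mid[OF assms(1) assms(1) idem[OF assms(1)]] prod_mid[OF assms(1,2)]]
    by blast
qed

lemma cones_L: "cones L = cone ` S"
proof
  show "cones L \<subseteq> cone ` S" unfolding cones_def using cone_unique by blast
  show "cone ` S \<subseteq> cones L" unfolding cones_def using cone_is by blast
qed

lemma apex_cone: assumes c: "c \<in> S" shows "apex L (cone c) = LI c"
  unfolding apex_def
proof (rule the_equality)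
  show "is_cone L (cone c) (LI c)" using cone_is c by blast
  fix a assume "is_cone L (cone c) a"
  then obtain c' where c': "c' \<in> S" "a = LI c'" "cone c = cone c'" using cone_unique by blast
  then have "c = c'" using cone_inj c by blast
  then show "a = LI c" using c' by simp
qed

lemma Lepi_R: assumes "c \<in> S" "f \<in> S" "u \<in> MI c f" shows "EP (R c u f) = R c u u"
  unfolding Lepi_def
proof (rule the_equality)
  have u: "u \<in> S" using mid_le assms by blast
  show "\<exists>e ua fa g. e \<in> S \<and> ua \<in> S \<and> fa \<in> S \<and> g \<in> S \<and> ua \<in> MI e fa \<and>
      R c u f = R e ua fa \<and> LI g = LI ua \<and> R c u u = R e ua g"
    using assms u by blast
  fix r' assume "\<exists>e ua fa g. e \<in> S \<and> ua \<in> S \<and> fa \<in> S \<and> g \<in> S \<and> ua \<in> MI e fa \<and>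
      R c u f = R e ua fa \<and> LI g = LI ua \<and> r' = R e ua g"
  then obtain e u' f' g where h: "e \<in> S" "u' \<in> S" "f' \<in> S" "g \<in> S" "u' \<in> MI e f'"
      "R c u f = R e u' f'" "LI g = LI u'" "r' = R e u' g" by blast
  have "c = e \<and> u = u' \<and> f = f'" using rho_inj[OF assms(1,2) h(1,3) assms(3) h(5,6)] .
  moreover have "g = u'" using lid_inj h by blast
  ultimately show "r' = R c u u" using h by simp
qed

lemma mid_self: assumes "c \<in> S" "f \<in> S" "u \<in> MI c f" shows "u \<in> MI c u"
proof -
  have "u \<in> S" "m u c = u" using mid_le assms by blast+
  then show ?thesis using mid_I assms by simp
qed

lemma cstar_cone: assumes c: "c \<in> S" and f: "f \<in> S" and u: "u \<in> MI c f"
  shows "cstar L (cone c) (R c u u) = cone u"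
proof
  have uS: "u \<in> S" "m u c = u" using mid_le c f u by blast+
  have cu: "m c u = u" using uS comm c by metis
  fix x show "cstar L (cone c) (R c u u) x = cone u x"
  proof (cases "x \<in> ob L")
    case True
    then obtain e where e: "e \<in> S" "x = LI e" using ob_E by blast
    have "cstar L (cone c) (R c u u) x = mcomp (R e (m e c) c) (R c u u)"
      unfolding cstar_def ops_L using True e cone_at c by simp
    also have "\<dots> = R e (m (m e c) u) u"
      using mcomp_R[OF e(1) c uS(1) prod_mid[OF e(1) c] mid_self[OF c f u]] .
    also have "m (m e c) u = m e u" using e c uS cu by simp
    finally show ?thesis using cone_at e uS by simp
  next
    case False then show ?thesis unfolding cstar_def cone_def by simp
  qed
qed

lemma Hset_cone: assumes c: "c \<in> S" and f: "f \<in> S"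
  shows "Hset L EP (cone c) (LI f) = cone ` MI c f"
proof -
  have "Hset L EP (cone c) (LI f) = {cstar L (cone c) (EP h) | h. h \<in> hom L (LI c) (LI f)}"
    unfolding Hset_def apex_cone[OF c] ..
  also have "\<dots> = {cstar L (cone c) (EP (R c u f)) | u. u \<in> MI c f}"
  proof (intro set_eqI iffI)
    fix x assume "x \<in> {cstar L (cone c) (EP h) | h. h \<in> hom L (LI c) (LI f)}"
    then obtain h where x: "x = cstar L (cone c) (EP h)" "h \<in> hom L (LI c) (LI f)" by blast
    then obtain u where "u \<in> MI c f" "h = R c u f" using hom_LI[OF c f] by blast
    then show "x \<in> {cstar L (cone c) (EP (R c u f)) | u. u \<in> MI c f}" using x by blast
  next
    fix x assume "x \<in> {cstar L (cone c) (EP (R c u f)) | u. u \<in> MI c f}"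
    then obtain u where x: "x = cstar L (cone c) (EP (R c u f))" "u \<in> MI c f" by blast
    then have "R c u f \<in> hom L (LI c) (LI f)" using R_in_hom c f by blast
    then show "x \<in> {cstar L (cone c) (EP h) | h. h \<in> hom L (LI c) (LI f)}" using x by blast
  qed
  also have "\<dots> = {cone u | u. u \<in> MI c f}"
  proof -
    have "cstar L (cone c) (EP (R c u f)) = cone u" if "u \<in> MI c f" for u
      using Lepi_R[OF c f that] cstar_cone[OF c f that] by simp
    then show ?thesis by (metis (no_types, lifting))
  qed
  finally show ?thesis by blast
qed

lemma HH: assumes "c \<in> S" "f \<in> S" "f' \<in> S" "u \<in> MI c f" "v \<in> MI f f'"
  shows "cstar L (cone c) (EP (mcomp (R c u f) (R f v f'))) = cone (m u v)"
proof -
  have w: "m u v \<in> MI c f'" using mult_mid assms by blast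
  show ?thesis using mcomp_R[OF assms] Lepi_R[OF assms(1,3) w] cstar_cone[OF assms(1,3) w] by simp
qed

lemma Hmap_cone: assumes c: "c \<in> S" and f: "f \<in> S" and f': "f' \<in> S" and v: "v \<in> MI f f'" and u: "u \<in> MI c f"
  shows "Hmap L EP (cone c) (R f v f') (cone u) = cone (m u v)"
proof -
  have g: "R f v f' \<in> hom L (LI f) (LI f')" using R_in_hom f f' v by blast
  have uS: "u \<in> S" using mid_le c f u by blast
  have dom: "cone u \<in> (\<Union>d\<in>ob L. \<Union>d'\<in>ob L. if R f v f' \<in> hom L d d' then Hset L EP (cone c) d else {})"
    using g ob_LI[OF f] ob_LI[OF f'] Hset_cone[OF c f] u by force
  have "(THE \<delta>'. \<exists>d\<in>ob L. \<exists>d'\<in>ob L. \<exists>h. R f v f' \<in> hom L d d' \<and> h \<in> hom L (apex L (cone c)) d \<and>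
               cone u = cstar L (cone c) (EP h) \<and> \<delta>' = cstar L (cone c) (EP (cmp L h (R f v f')))) = cone (m u v)"
  proof (rule the_equality)
    show "\<exists>d\<in>ob L. \<exists>d'\<in>ob L. \<exists>h. R f v f' \<in> hom L d d' \<and> h \<in> hom L (apex L (cone c)) d \<and>
               cone u = cstar L (cone c) (EP h) \<and> cone (m u v) = cstar L (cone c) (EP (cmp L h (R f v f')))"
      apply (rule bexI[of _ "LI f"], rule bexI[of _ "LI f'"], rule exI[of _ "R c u f"])
      using g apex_cone[OF c] R_in_hom[OF c f u] Lepi_R[OF c f u] cstar_cone[OF c f u] HH[OF c f f' u v] ops_L
        ob_LI[OF f] ob_LI[OF f'] by simp_all
  next
    fix \<delta>' assume "\<exists>d\<in>ob L. \<exists>d'\<in>ob L. \<exists>h. R f v f' \<in> hom L d d' \<and> h \<in> hom L (apex L (cone c)) d \<and>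
               cone u = cstar L (cone c) (EP h) \<and> \<delta>' = cstar L (cone c) (EP (cmp L h (R f v f')))"
    then obtain d d' h where h: "d \<in> ob L" "d' \<in> ob L" "R f v f' \<in> hom L d d'" "h \<in> hom L (LI c) d"
      "cone u = cstar L (cone c) (EP h)" "\<delta>' = cstar L (cone c) (EP (mcomp h (R f v f')))"
      using apex_cone[OF c] ops_L by auto
    obtain e1 f1 v1 where h1: "e1\<in>S" "f1\<in>S" "v1 \<in> MI e1 f1" "d = LI e1" "d' = LI f1" "R f v f' = R e1 v1 f1"
      using h(3) hom_gen by blast
    have "f = e1" using rho_inj[OF f f' h1(1,2) v h1(3,6)] by simp
    then have d: "d = LI f" using h1 by simp
    obtain u' where u': "u' \<in> MI c f" "h = R c u' f" using h(4) d hom_LI c f by blast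
    have u'S: "u' \<in> S" using mid_le c f u' by blast
    have "cone u = cone u'" using h(5) u' Lepi_R[OF c f u'(1)] cstar_cone[OF c f u'(1)] by simp
    then have "u = u'" using cone_inj uS u'S by blast
    then show "\<delta>' = cone (m u v)" using h(6) u' HH[OF c f f' u v] by simp
  qed
  then show ?thesis unfolding Hmap_def using dom by simp
qed


abbreviation "HF c \<equiv> Hfun L EP (cone c)"

lemma R_mors: "f \<in> S \<Longrightarrow> f' \<in> S \<Longrightarrow> v \<in> MI f f' \<Longrightarrow> R f v f' \<in> mors L"
  unfolding mors_def using R_in_hom ob_LI by blast

lemma HF_fst: "c \<in> S \<Longrightarrow> f \<in> S \<Longrightarrow> fst (HF c) (LI f) = cone ` MI c f"
  unfolding Hfun_def using ob_LI Hset_cone by simp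

lemma HF_snd: "c \<in> S \<Longrightarrow> f \<in> S \<Longrightarrow> f' \<in> S \<Longrightarrow> v \<in> MI f f' \<Longrightarrow> u \<in> MI c f \<Longrightarrow>
    snd (HF c) (R f v f') (cone u) = cone (m u v)"
  unfolding Hfun_def using R_mors Hmap_cone by simp

lemma cone_inv: "u \<in> S \<Longrightarrow> inv_into S cone (cone u) = u"
  by (rule inv_into_f_f) (auto intro: inj_onI cone_inj)

definition NT where "NT c w = (\<lambda>d\<in>ob L. \<lambda>x\<in>fst (HF c) d. cone (m (inv_into S cone x) w))"

lemma NT_app: assumes "c \<in> S" "f \<in> S" "u \<in> MI c f" shows "NT c w (LI f) (cone u) = cone (m u w)"
proof -
  have "u \<in> S" using mid_le assms by blast
  then show ?thesis unfolding NT_def using assms ob_LI HF_fst cone_inv by simp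
qed

lemma mid_mult2: assumes "c \<in> S" "c' \<in> S" "f \<in> S" "u \<in> MI c f" "w \<in> MI c c'" shows "m u w \<in> MI c' f"
proof -
  have u: "u \<in> S" "m u f = u" and w: "w \<in> S" "m w c' = w" using mid_le assms by blast+
  have "m (m u w) c' = m u (m w c')" using u w assms by simp
  also have "\<dots> = m u w" using w by simp
  finally have 1: "m (m u w) c' = m u w" .
  have "m (m u w) f = m (m u f) w" using u(1) w(1) assms by (simp add: AC)
  also have "\<dots> = m u w" using u by simp
  finally have 2: "m (m u w) f = m u w" .
  show ?thesis using mid_I 1 2 u w assms by simp
qed

lemma HF_fstE: assumes "c \<in> S" "d \<in> ob L" "x \<in> fst (HF c) d"
  obtains f u where "f \<in> S" "d = LI f" "u \<in> MI c f" "x = cone u"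
proof -
  obtain f where f: "f \<in> S" "d = LI f" using ob_E assms by blast
  then show ?thesis using that assms HF_fst by auto
qed

lemma NT_nt: assumes c: "c \<in> S" and c': "c' \<in> S" and w: "w \<in> MI c c'"
  shows "is_nt L (HF c) (HF c') (NT c w)"
  unfolding is_nt_def
proof (intro conjI ballI)
  show "NT c w \<in> extensional (ob L)" unfolding NT_def by simp
next
  fix d assume d: "d \<in> ob L"
  show "NT c w d \<in> extensional (fst (HF c) d)" unfolding NT_def using d by simp
  show "NT c w d \<in> fst (HF c) d \<rightarrow> fst (HF c') d"
  proof
    fix x assume x: "x \<in> fst (HF c) d"
    obtain f u where fu: "f \<in> S" "d = LI f" "u \<in> MI c f" "x = cone u" using HF_fstE c d x by blast
    have "NT c w d x = cone (m u w)" using NT_app c fu by simp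
    moreover have "m u w \<in> MI c' f" using mid_mult2 c c' fu w by blast
    ultimately show "NT c w d x \<in> fst (HF c') d" using HF_fst c' fu by simp
  qed
next
  fix d d' g x assume d: "d \<in> ob L" "d' \<in> ob L" and g: "g \<in> hom L d d'" and x: "x \<in> fst (HF c) d"
  obtain f f' v where h: "f\<in>S" "f'\<in>S" "v \<in> MI f f'" "d = LI f" "d' = LI f'" "g = R f v f'"
    using g hom_gen by blast
  obtain u where u: "u \<in> MI c f" "x = cone u" using HF_fstE c d(1) x h(1,4) lid_inj by metis
  have uw: "m u w \<in> MI c' f" using mid_mult2 c c' h(1) u(1) w by blast
  have uv: "m u v \<in> MI c f'" using mult_mid c h(1,2) u(1) h(3) by blast
  have uS: "u \<in> S" "v \<in> S" "w \<in> S" using mid_le u(1) h w c c' by blast+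
  have "snd (HF c') g (NT c w d x) = cone (m (m u w) v)"
    using NT_app[OF c h(1) u(1)] HF_snd[OF c' h(1,2,3) uw] h u by simp
  also have "m (m u w) v = m (m u v) w" using uS by (simp add: AC)
  also have "cone (m (m u v) w) = NT c w d' (snd (HF c) g x)"
    using NT_app[OF c h(2) uv] HF_snd[OF c h(1,2,3) u(1)] h u by simp
  finally show "snd (HF c') g (NT c w d x) = NT c w d' (snd (HF c) g x)" .
qed

lemma nt_NT: assumes c: "c \<in> S" and c': "c' \<in> S" and nt: "is_nt L (HF c) (HF c') \<sigma>"
  shows "\<exists>w\<in>MI c c'. \<sigma> = NT c w"
proof -
  have ext: "\<sigma> \<in> extensional (ob L)"
    and maps: "\<And>d. d \<in> ob L \<Longrightarrow> \<sigma> d \<in> fst (HF c) d \<rightarrow> fst (HF c') d \<and> \<sigma> d \<in> extensional (fst (HF c) d)"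
    and nat: "\<And>d d' g x. d \<in> ob L \<Longrightarrow> d' \<in> ob L \<Longrightarrow> g \<in> hom L d d' \<Longrightarrow> x \<in> fst (HF c) d \<Longrightarrow>
        snd (HF c') g (\<sigma> d x) = \<sigma> d' (snd (HF c) g x)"
    using nt unfolding is_nt_def by auto
  have cc: "c \<in> MI c c" using self_mid c by simp
  have "cone c \<in> fst (HF c) (LI c)" using HF_fst c cc by simp
  then have "\<sigma> (LI c) (cone c) \<in> fst (HF c') (LI c)" using maps[OF ob_LI[OF c]] by blast
  then obtain w where w: "w \<in> MI c' c" "\<sigma> (LI c) (cone c) = cone w" using HF_fst c c' by auto
  have w2: "w \<in> MI c c'" using w mid_sym c c' by blast
  have wS: "w \<in> S" using mid_le w c c' by blast
  have val: "\<sigma> (LI f) (cone u) = cone (m u w)" if f: "f \<in> S" and u: "u \<in> MI c f" for f u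
  proof -
    have g: "R c u f \<in> hom L (LI c) (LI f)" using R_in_hom c f u by blast
    have uS: "u \<in> S" "m u c = u" using mid_le u c f by blast+
    have "snd (HF c') (R c u f) (\<sigma> (LI c) (cone c)) = \<sigma> (LI f) (snd (HF c) (R c u f) (cone c))"
      using nat[OF ob_LI[OF c] ob_LI[OF f] g \<open>cone c \<in> fst (HF c) (LI c)\<close>] .
    moreover have "snd (HF c') (R c u f) (\<sigma> (LI c) (cone c)) = cone (m w u)"
      using w HF_snd[OF c' c f u w(1)] by simp
    moreover have "snd (HF c) (R c u f) (cone c) = cone (m c u)"
      using HF_snd[OF c c f u cc] by simp
    moreover have "m c u = u" using uS comm c by metis
    moreover have "m w u = m u w" using uS wS comm by metis
    ultimately show ?thesis by simp
  qed
  have "\<sigma> = NT c w"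
  proof
    fix d show "\<sigma> d = NT c w d"
    proof (cases "d \<in> ob L")
      case False then show ?thesis using ext unfolding NT_def extensional_def by simp
    next
      case True
      show ?thesis
      proof
        fix x show "\<sigma> d x = NT c w d x"
        proof (cases "x \<in> fst (HF c) d")
          case False then show ?thesis using maps[OF True] True unfolding NT_def extensional_def by simp
        next
          case x: True
          obtain f u where fu: "f \<in> S" "d = LI f" "u \<in> MI c f" "x = cone u" using HF_fstE c True x by blast
          then show ?thesis using val NT_app c by simp
        qed
      qed
    qed
  qed
  then show ?thesis using w2 by blast
qed


abbreviation "ND \<equiv> Ndual L EP"

lemma ob_ND: "ob ND = (\<lambda>c. HF c) ` S"
  unfolding Ndual_def using cones_L by (simp add: image_image)
lemma hom_ND: "hom ND F G = {(F, \<sigma>, G) | \<sigma>. is_nt L F G \<sigma>}" by (simp add: Ndual_def)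
lemma ops_ND: "cmp ND = ntcomp L" "idm ND = (\<lambda>F. (F, (\<lambda>d\<in>ob L. \<lambda>x\<in>fst F d. x), F))"
   "sub ND = (\<lambda>F G. \<forall>d\<in>ob L. fst F d \<subseteq> fst G d)" "incl ND = (\<lambda>F G. (F, (\<lambda>d\<in>ob L. \<lambda>x\<in>fst F d. x), G))"
  by (simp_all add: Ndual_def)

lemma HF_le: assumes c: "c \<in> S" and c': "c' \<in> S" and sub: "fst (HF c) (LI c) \<subseteq> fst (HF c') (LI c)"
  shows "m c c' = c"
proof -
  have cc: "c \<in> MI c c" using self_mid c by simp
  have "cone c \<in> fst (HF c) (LI c)" using HF_fst c cc by simp
  then have "cone c \<in> cone ` MI c' c" using sub HF_fst c c' by auto
  then obtain u where u: "u \<in> MI c' c" "cone c = cone u" by blast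
  have "u \<in> S" using mid_le u c c' by blast
  then have "c = u" using cone_inj c u by blast
  then show ?thesis using mid_le u c c' by blast
qed

lemma HF_inj: assumes c: "c \<in> S" and c': "c' \<in> S" and eq: "HF c = HF c'" shows "c = c'"
proof -
  have "m c c' = c" using HF_le c c' eq by simp
  moreover have "m c' c = c'" using HF_le c c' eq by simp
  ultimately show ?thesis using comm c c' by metis
qed

lemma HF_inv: "c \<in> S \<Longrightarrow> inv_into S (\<lambda>c. HF c) (HF c) = c"
  by (rule inv_into_f_f) (auto intro: inj_onI HF_inj)

lemma hom_ND_char: assumes c: "c \<in> S" and c': "c' \<in> S"
  shows "hom ND (HF c) (HF c') = (\<lambda>w. (HF c, NT c w, HF c')) ` MI c c'"
proof -
  have "hom ND (HF c) (HF c') = {(HF c, \<sigma>, HF c') | \<sigma>. is_nt L (HF c) (HF c') \<sigma>}" by (rule hom_ND)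
  also have "\<dots> = (\<lambda>w. (HF c, NT c w, HF c')) ` MI c c'"
  proof (intro set_eqI iffI)
    fix x assume "x \<in> {(HF c, \<sigma>, HF c') | \<sigma>. is_nt L (HF c) (HF c') \<sigma>}"
    then obtain \<sigma> where x: "x = (HF c, \<sigma>, HF c')" "is_nt L (HF c) (HF c') \<sigma>" by blast
    then obtain w where "w \<in> MI c c'" "\<sigma> = NT c w" using nt_NT c c' by blast
    then show "x \<in> (\<lambda>w. (HF c, NT c w, HF c')) ` MI c c'" using x by blast
  next
    fix x assume "x \<in> (\<lambda>w. (HF c, NT c w, HF c')) ` MI c c'"
    then obtain w where x: "w \<in> MI c c'" "x = (HF c, NT c w, HF c')" by blast
    then have "is_nt L (HF c) (HF c') (NT c w)" using NT_nt c c' by blast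
    then show "x \<in> {(HF c, \<sigma>, HF c') | \<sigma>. is_nt L (HF c) (HF c') \<sigma>}" using x by blast
  qed
  finally show ?thesis .
qed

lemma ntcomp_NT: assumes c: "c \<in> S" and c': "c' \<in> S" and c'': "c'' \<in> S" and w: "w \<in> MI c c'" and w': "w' \<in> MI c' c''"
  shows "ntcomp L (HF c, NT c w, HF c') (HF c', NT c' w', HF c'') = (HF c, NT c (m w w'), HF c'')"
proof -
  have wS: "w \<in> S" "w' \<in> S" using mid_le w w' c c' c'' by blast+
  have "(\<lambda>d\<in>ob L. \<lambda>x\<in>fst (HF c) d. NT c' w' d (NT c w d x)) = NT c (m w w')"
    unfolding NT_def[of c "m w w'"]
  proof (rule restrict_ext, rule restrict_ext)
    fix d x assume d: "d \<in> ob L" and x: "x \<in> fst (HF c) d"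
    obtain f u where fu: "f \<in> S" "d = LI f" "u \<in> MI c f" "x = cone u" using HF_fstE c d x by blast
    have uS: "u \<in> S" using mid_le fu c by blast
    have uw: "m u w \<in> MI c' f" using mid_mult2 c c' fu w by blast
    have "NT c' w' d (NT c w d x) = cone (m (m u w) w')" using NT_app[OF c fu(1,3)] NT_app[OF c' fu(1) uw] fu by simp
    also have "m (m u w) w' = m (inv_into S cone x) (m w w')" using cone_inv uS fu wS by simp
    finally show "NT c' w' d (NT c w d x) = cone (m (inv_into S cone x) (m w w'))" .
  qed
  then show ?thesis unfolding ntcomp_def by simp
qed

lemma idm_NT: assumes c: "c \<in> S" shows "(\<lambda>d\<in>ob L. \<lambda>x\<in>fst (HF c) d. x) = NT c c"
  unfolding NT_def[of c c]
proof (rule restrict_ext, rule restrict_ext)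
  fix d x assume d: "d \<in> ob L" and x: "x \<in> fst (HF c) d"
  obtain f u where fu: "f \<in> S" "d = LI f" "u \<in> MI c f" "x = cone u" using HF_fstE c d x by blast
  have uS: "u \<in> S" "m u c = u" using mid_le fu c by blast+
  show "x = cone (m (inv_into S cone x) c)" using cone_inv uS fu by simp
qed

definition "Fo F = LI (inv_into S (\<lambda>c. HF c) F)"
definition "Fm T = R (inv_into S (\<lambda>c. HF c) (fst T))
     (inv_into S cone (fst (snd T) (LI (inv_into S (\<lambda>c. HF c) (fst T))) (cone (inv_into S (\<lambda>c. HF c) (fst T)))))
     (inv_into S (\<lambda>c. HF c) (snd (snd T)))"

lemma Fo_val: "c \<in> S \<Longrightarrow> Fo (HF c) = LI c" unfolding Fo_def using HF_inv by simp

lemma Fm_val: assumes c: "c \<in> S" and c': "c' \<in> S" and w: "w \<in> MI c c'"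
  shows "Fm (HF c, NT c w, HF c') = R c w c'"
proof -
  have cc: "c \<in> MI c c" using self_mid c by simp
  have wS: "w \<in> S" "m w c = w" using mid_le w c c' by blast+
  have "m c w = w" using wS comm c by metis
  then have "NT c w (LI c) (cone c) = cone w" using NT_app[OF c c cc] by simp
  then show ?thesis unfolding Fm_def using HF_inv c c' cone_inv wS by simp
qed


lemma iso_ND: "ncat_iso ND L"
  unfolding ncat_iso_def
proof (rule exI[of _ Fo], rule exI[of _ Fm], intro conjI)
  show "bij_betw Fo (ob ND) (ob L)"
    unfolding bij_betw_def
  proof
    show "inj_on Fo (ob ND)"
    proof (rule inj_onI)
      fix x y assume "x \<in> ob ND" "y \<in> ob ND" "Fo x = Fo y"
      then obtain c c' where "c \<in> S" "c' \<in> S" "x = HF c" "y = HF c'" "LI c = LI c'"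
        using ob_ND Fo_val by auto
      then show "x = y" using lid_inj by blast
    qed
    show "Fo ` ob ND = ob L" unfolding ob_ND ob_L using Fo_val by (auto simp: image_image)
  qed
next
  show "\<forall>a\<in>ob ND. \<forall>b\<in>ob ND. bij_betw Fm (hom ND a b) (hom L (Fo a) (Fo b))"
  proof (intro ballI)
    fix a b assume "a \<in> ob ND" "b \<in> ob ND"
    then obtain c c' where c: "c \<in> S" "a = HF c" and c': "c' \<in> S" "b = HF c'" using ob_ND by auto
    have hl: "hom L (Fo a) (Fo b) = (\<lambda>w. R c w c') ` MI c c'"
      using hom_LI[OF c(1) c'(1)] Fo_val c c' by auto
    show "bij_betw Fm (hom ND a b) (hom L (Fo a) (Fo b))"
      unfolding bij_betw_def hom_ND_char[OF c(1) c'(1), folded c(2) c'(2)] hl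
    proof
      show "inj_on Fm ((\<lambda>w. (a, NT c w, b)) ` MI c c')"
      proof (rule inj_onI)
        fix x y assume "x \<in> (\<lambda>w. (a, NT c w, b)) ` MI c c'" "y \<in> (\<lambda>w. (a, NT c w, b)) ` MI c c'" "Fm x = Fm y"
        then obtain w w' where "w \<in> MI c c'" "w' \<in> MI c c'" "x = (a, NT c w, b)" "y = (a, NT c w', b)"
          "R c w c' = R c w' c'" using Fm_val c c' by auto
        then show "x = y" using rho_inj c c' by metis
      qed
      show "Fm ` (\<lambda>w. (a, NT c w, b)) ` MI c c' = (\<lambda>w. R c w c') ` MI c c'"
        using Fm_val c c' by (auto simp: image_image)
    qed
  qed
next
  show "\<forall>a\<in>ob ND. \<forall>b\<in>ob ND. \<forall>d\<in>ob ND. \<forall>f\<in>hom ND a b. \<forall>g\<in>hom ND b d.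
      Fm (cmp ND f g) = cmp L (Fm f) (Fm g)"
  proof (intro ballI)
    fix a b d f g assume "a \<in> ob ND" "b \<in> ob ND" "d \<in> ob ND" and fg: "f \<in> hom ND a b" "g \<in> hom ND b d"
    then obtain c c' c'' where c: "c \<in> S" "a = HF c" and c': "c' \<in> S" "b = HF c'" and c'': "c'' \<in> S" "d = HF c''"
      using ob_ND by auto
    obtain w where w: "w \<in> MI c c'" "f = (HF c, NT c w, HF c')" using fg(1) hom_ND_char c c' by auto
    obtain w' where w': "w' \<in> MI c' c''" "g = (HF c', NT c' w', HF c'')" using fg(2) hom_ND_char c' c'' by auto
    have ww: "m w w' \<in> MI c c''" using mult_mid c c' c'' w w' by blast
    have "Fm (cmp ND f g) = R c (m w w') c''"
      using ntcomp_NT[OF c(1) c'(1) c''(1) w(1) w'(1)] Fm_val[OF c(1) c''(1) ww] w w' ops_ND by simp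
    also have "\<dots> = mcomp (R c w c') (R c' w' c'')" using mcomp_R c c' c'' w w' by simp
    finally show "Fm (cmp ND f g) = cmp L (Fm f) (Fm g)" using Fm_val c c' c'' w w' ops_L by simp
  qed
next
  show "\<forall>a\<in>ob ND. Fm (idm ND a) = idm L (Fo a)"
  proof
    fix a assume "a \<in> ob ND"
    then obtain c where c: "c \<in> S" "a = HF c" using ob_ND by auto
    have cc: "c \<in> MI c c" using self_mid c by simp
    show "Fm (idm ND a) = idm L (Fo a)"
      using ops_ND ops_L idm_NT[OF c(1)] Fm_val[OF c(1) c(1) cc] midm_R c Fo_val by simp
  qed
next
  have subiff: "sub ND (HF c) (HF c') \<longleftrightarrow> m c c' = c" if c: "c \<in> S" and c': "c' \<in> S" for c c'
  proof
    assume "sub ND (HF c) (HF c')"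
    then have "fst (HF c) (LI c) \<subseteq> fst (HF c') (LI c)" using ops_ND ob_LI c by simp
    then show "m c c' = c" using HF_le c c' by blast
  next
    assume cc': "m c c' = c"
    have "fst (HF c) d \<subseteq> fst (HF c') d" if d: "d \<in> ob L" for d
    proof
      fix x assume x: "x \<in> fst (HF c) d"
      obtain f u where fu: "f \<in> S" "d = LI f" "u \<in> MI c f" "x = cone u" using HF_fstE c d x by blast
      have uS: "u \<in> S" "m u c = u" "m u f = u" using mid_le fu c by blast+
      have "m u c' = m (m u c) c'" using uS by simp
      also have "\<dots> = m u (m c c')" using assoc uS(1) c c' by blast
      also have "\<dots> = u" using cc' uS by simp
      finally have "u \<in> MI c' f" using mid_I uS c' fu by simp
      then show "x \<in> fst (HF c') d" using HF_fst c' fu by simp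
    qed
    then show "sub ND (HF c) (HF c')" using ops_ND by simp
  qed
  show "\<forall>a\<in>ob ND. \<forall>b\<in>ob ND. sub ND a b \<longleftrightarrow> sub L (Fo a) (Fo b)"
  proof (intro ballI)
    fix a b assume "a \<in> ob ND" "b \<in> ob ND"
    then obtain c c' where c: "c \<in> S" "a = HF c" and c': "c' \<in> S" "b = HF c'" using ob_ND by auto
    show "sub ND a b \<longleftrightarrow> sub L (Fo a) (Fo b)"
      using subiff[OF c(1) c'(1)] lid_sub[OF c(1) c'(1)] Fo_val c c' ops_L by simp
  qed
  show "\<forall>a\<in>ob ND. \<forall>b\<in>ob ND. sub ND a b \<longrightarrow> Fm (incl ND a b) = incl L (Fo a) (Fo b)"
  proof (intro ballI impI)
    fix a b assume "a \<in> ob ND" "b \<in> ob ND" and sab: "sub ND a b"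
    then obtain c c' where c: "c \<in> S" "a = HF c" and c': "c' \<in> S" "b = HF c'" using ob_ND by auto
    have cc': "m c c' = c" using subiff c c' sab by blast
    have cm: "c \<in> MI c c'" using self_mid c c' cc' by simp
    show "Fm (incl ND a b) = incl L (Fo a) (Fo b)"
      using ops_ND ops_L idm_NT[OF c(1)] Fm_val[OF c(1) c'(1) cm] mincl_R c c' Fo_val by simp
  qed
qed

end

theorem mainTheorem9:
  fixes S :: "'a set" and m :: "'a \<Rightarrow> 'a \<Rightarrow> 'a"
  assumes "semilattice_on S m"
  shows "ncat_iso (Ndual (Lcat S m) (Lepi S m)) (Rcat S m) \<and>
         ncat_iso (Ndual (Rcat S m) (Repi S m)) (Lcat S m)"
  using iso_ND[OF assms] Rcat_eq[OF assms] Repi_eq[OF assms] by simp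

end
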